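(* Let $X$ be a (Tychonoff) space and $\{K_n\}_{n\in\mathbb N}$ a sequence of compact subsets of $X$ each of which has property $C$. Then every continuous map $f\colon X\to Y$ into a metrizable space $Y$ admits a factorization $(Z,h,g)$ such that $Z$ is metrizable and every set $h(K_n)$ has property $C$.
   Context: A factorization of $f\colon X\to Y$ is a triple $(Z,h,g)$ where $h\colon X\to Z$ and $g\colon Z\to Y$ are continuous, $f=g\circ h$ (with $g$ onto $Y$ when $f$ is onto), and $w(Z)\le w(Y)$, $w$ denoting topological weight. A compact space $K$ has property $C$ if for every sequence $\{\omega_n\}$ of open covers of $K$ there is a sequence $\{\gamma_n\}$ of disjoint open families with each $\gamma_n$ refining $\omega_n$ and $\bigcup_n\gamma_n$ covering $K$. *)

theory Defs
  imports "HOL-Analysis.Analysis"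
begin

definition is_base_of :: "'a topology \<Rightarrow> 'a set set \<Rightarrow> bool" where
  "is_base_of T B \<longleftrightarrow> (\<forall>U\<in>B. openin T U) \<and>
     (\<forall>U. openin T U \<longrightarrow> (\<exists>C. C \<subseteq> B \<and> \<Union>C = U))"

text \<open>w(Z) \<le> w(Y): the weight (least cardinality of a base) of Z is at most that of Y,
  i.e. every base of Y dominates in cardinality some base of Z.\<close>
definition weight_le :: "'a topology \<Rightarrow> 'b topology \<Rightarrow> bool" where
  "weight_le Z Y \<longleftrightarrow>
     (\<forall>BY. is_base_of Y BY \<longrightarrow> (\<exists>BZ. is_base_of Z BZ \<and> (card_of BZ, card_of BY) \<in> ordLeq))"

definition refines :: "'a set set \<Rightarrow> 'a set set \<Rightarrow> bool" where
  "refines \<gamma> \<omega> \<longleftrightarrow> (\<forall>V\<in>\<gamma>. \<exists>U\<in>\<omega>. V \<subseteq> U)"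

definition property_C :: "'a topology \<Rightarrow> bool" where
  "property_C K \<longleftrightarrow> compact_space K \<and>
     (\<forall>\<omega> :: nat \<Rightarrow> 'a set set.
        (\<forall>n. (\<forall>U\<in>\<omega> n. openin K U) \<and> \<Union>(\<omega> n) = topspace K) \<longrightarrow>
        (\<exists>\<gamma> :: nat \<Rightarrow> 'a set set.
           (\<forall>n. (\<forall>V\<in>\<gamma> n. openin K V) \<and> pairwise disjnt (\<gamma> n) \<and> refines (\<gamma> n) (\<omega> n)) \<and>
           \<Union>(\<Union>n. \<gamma> n) = topspace K))"

definition factorization ::
  "'a topology \<Rightarrow> 'b topology \<Rightarrow> ('a \<Rightarrow> 'b) \<Rightarrow> 'c topology \<Rightarrow> ('a \<Rightarrow> 'c) \<Rightarrow> ('c \<Rightarrow> 'b) \<Rightarrow> bool" where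
  "factorization X Y f Z h g \<longleftrightarrow>
     continuous_map X Z h \<and> continuous_map Z Y g \<and>
     (\<forall>x\<in>topspace X. f x = g (h x)) \<and>
     (f ` topspace X = topspace Y \<longrightarrow> g ` topspace Z = topspace Y) \<and>
     weight_le Z Y"

end

theory Submission imports Defs begin

unbundle cardinal_syntax

definition sterm :: "(nat \<Rightarrow> 'a \<Rightarrow> real) \<Rightarrow> 'a \<Rightarrow> 'a \<Rightarrow> nat \<Rightarrow> real" where
  "sterm \<phi> x y i = (1/2)^i * min 1 \<bar>\<phi> i x - \<phi> i y\<bar>"

lemma sterm_nonneg: "0 \<le> sterm \<phi> x y i" by (simp add: sterm_def)
lemma sterm_le: "sterm \<phi> x y i \<le> (1/2)^i" by (simp add: sterm_def)
lemma sterm_commute: "sterm \<phi> x y i = sterm \<phi> y x i" by (simp add: sterm_def abs_minus_commute)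
lemma summable_sterm: "summable (sterm \<phi> x y)"
  by (rule summable_comparison_test[OF _ summable_geometric[of "1/2::real"]])
     (auto simp: sterm_nonneg sterm_le)
lemma sterm_triangle: "sterm \<phi> x z i \<le> sterm \<phi> x y i + sterm \<phi> y z i"
proof -
  have "min 1 \<bar>\<phi> i x - \<phi> i z\<bar> \<le> min 1 \<bar>\<phi> i x - \<phi> i y\<bar> + min 1 \<bar>\<phi> i y - \<phi> i z\<bar>"
    by (simp add: min_def abs_if split: if_splits)
  then show ?thesis unfolding sterm_def
    by (metis distrib_left mult_left_mono zero_le_divide_1_iff zero_le_numeral zero_le_power)
qed

lemma suminf_sterm_nonneg: "0 \<le> suminf (sterm \<phi> x y)"
  by (simp add: suminf_nonneg summable_sterm sterm_nonneg)

lemma suminf_sterm_triangle: "suminf (sterm \<phi> x z) \<le> suminf (sterm \<phi> x y) + suminf (sterm \<phi> y z)"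
proof -
  have "suminf (sterm \<phi> x z) \<le> suminf (\<lambda>i. sterm \<phi> x y i + sterm \<phi> y z i)"
    by (intro suminf_le summable_add summable_sterm sterm_triangle)
  also have "\<dots> = suminf (sterm \<phi> x y) + suminf (sterm \<phi> y z)"
    by (intro suminf_add[symmetric] summable_sterm)
  finally show ?thesis .
qed

lemma sterm_le_abs: "sterm \<phi> x y i \<le> (1/2)^i * \<bar>\<phi> i x - \<phi> i y\<bar>"
  unfolding sterm_def by (intro mult_left_mono) auto

lemma sterm_single: "sterm \<phi> x y i \<le> suminf (sterm \<phi> x y)"
proof -
  have "sterm \<phi> x y i \<le> sum (sterm \<phi> x y) {..<Suc i}"
    using sum_nonneg[of "{..<i}" "sterm \<phi> x y"] sterm_nonneg[of \<phi> x y] by simp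
  also have "\<dots> \<le> suminf (sterm \<phi> x y)"
    by (rule sum_le_suminf[OF summable_sterm]) (auto simp: sterm_nonneg)
  finally show ?thesis .
qed
lemma suminf_sterm_zero: "suminf (sterm \<phi> x y) = 0 \<Longrightarrow> \<phi> i x = \<phi> i y"
proof -
  assume "suminf (sterm \<phi> x y) = 0"
  then have "sterm \<phi> x y i = 0"
    using sterm_single[of \<phi> x y i] sterm_nonneg[of \<phi> x y i] by linarith
  then have "min 1 \<bar>\<phi> i x - \<phi> i y\<bar> = 0" by (simp add: sterm_def)
  then show ?thesis by (simp add: min_def split: if_splits)
qed

lemma sterm_tail: "suminf (sterm \<phi> x y) \<le> sum (sterm \<phi> x y) {..<j} + 2 * (1/2)^j"
proof -
  have "suminf (sterm \<phi> x y) = (\<Sum>n. sterm \<phi> x y (n + j)) + sum (sterm \<phi> x y) {..<j}"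
    by (rule suminf_split_initial_segment[OF summable_sterm])
  moreover have "(\<Sum>n. sterm \<phi> x y (n + j)) \<le> (\<Sum>n. (1/2)^j * (1/2::real)^n)"
    by (intro suminf_le summable_mult summable_geometric)
       (auto simp: summable_sterm summable_ignore_initial_segment intro: order.trans[OF sterm_le] simp flip: power_add)
  moreover have "(\<Sum>n. (1/2)^j * (1/2::real)^n) = 2 * (1/2)^j"
    by (simp add: suminf_mult suminf_geometric summable_geometric)
  ultimately show ?thesis by linarith
qed

lemma geom_sum_le2: "(\<Sum>i<j. (1/2::real)^i) \<le> 2"
proof -
  have "(\<Sum>i<j. (1/2::real)^i) \<le> (\<Sum>i. (1/2::real)^i)"
    by (rule sum_le_suminf[OF summable_geometric]) auto
  also have "\<dots> = 2" by (simp add: suminf_geometric)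
  finally show ?thesis .
qed

lemma (in Metric_space) lebesgue_cover:
  assumes L: "compactin mtopology L" and U: "\<forall>U\<in>\<U>. openin (subtopology mtopology L) U" and cv: "L \<subseteq> \<Union>\<U>"
  shows "\<exists>\<delta>>0. \<forall>z\<in>L. \<exists>U\<in>\<U>. mball z \<delta> \<inter> L \<subseteq> U"
proof -
  have LM: "L \<subseteq> M" using L compactin_subset_topspace by fastforce
  have "\<exists>r>0. \<exists>U\<in>\<U>. mball z (2*r) \<inter> L \<subseteq> U" if z: "z \<in> L" for z
  proof -
    obtain U where U1: "U \<in> \<U>" "z \<in> U" using cv z by blast
    then obtain T where T: "openin mtopology T" "U = T \<inter> L" using U by (auto simp: openin_subtopology)
    then obtain r0 where "r0 > 0" "mball z r0 \<subseteq> T" using U1 openin_mtopology by blast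
    then show ?thesis using T U1 by (intro exI[of _ "r0/2"] conjI bexI[of _ U]) auto
  qed
  then obtain rr UU where rr: "\<And>z. z \<in> L \<Longrightarrow> rr z > 0 \<and> UU z \<in> \<U> \<and> mball z (2 * rr z) \<inter> L \<subseteq> UU z"
    by metis
  have "\<exists>F. finite F \<and> F \<subseteq> (\<lambda>z. mball z (rr z)) ` L \<and> L \<subseteq> \<Union>F"
  proof (rule L[unfolded compactin_def, THEN conjunct2, rule_format], intro conjI ballI)
    fix V assume "V \<in> (\<lambda>z. mball z (rr z)) ` L"
    then show "openin mtopology V" by auto
  next
    show "L \<subseteq> \<Union> ((\<lambda>z. mball z (rr z)) ` L)"
    proof
      fix x assume x: "x \<in> L"
      then have "x \<in> mball x (rr x)" using rr LM by auto
      then show "x \<in> \<Union> ((\<lambda>z. mball z (rr z)) ` L)" using x by blast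
    qed
  qed
  then obtain F where F: "finite F" "F \<subseteq> (\<lambda>z. mball z (rr z)) ` L" "L \<subseteq> \<Union>F" by blast
  obtain C where C: "C \<subseteq> L" "finite C" "F = (\<lambda>z. mball z (rr z)) ` C"
    using finite_subset_image[OF F(1) F(2)] by blast
  show ?thesis
  proof (cases "C = {}")
    case True
    then have "L = {}" using C F by auto
    then show ?thesis by (intro exI[of _ 1]) auto
  next
    case False
    define \<delta> where "\<delta> = Min (rr ` C)"
    have dpos: "\<delta> > 0" unfolding \<delta>_def using C False rr by (subst Min_gr_iff) auto
    have dle: "\<delta> \<le> rr z" if "z \<in> C" for z unfolding \<delta>_def using C that by (intro Min_le) auto
    show ?thesis
    proof (intro exI[of _ \<delta>] conjI dpos ballI)
      fix w assume w: "w \<in> L"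
      then obtain z where z: "z \<in> C" "w \<in> mball z (rr z)" using F C by auto
      have "mball w \<delta> \<inter> L \<subseteq> mball z (2 * rr z) \<inter> L"
      proof
        fix y assume y: "y \<in> mball w \<delta> \<inter> L"
        then have "d z y \<le> d z w + d w y" using z by (intro triangle) auto
        also have "\<dots> < rr z + \<delta>" using y z by auto
        also have "\<dots> \<le> 2 * rr z" using dle[OF z(1)] by simp
        finally show "y \<in> mball z (2 * rr z) \<inter> L" using y z by auto
      qed
      also have "\<dots> \<subseteq> UU z" using rr z C by blast
      finally show "\<exists>U\<in>\<U>. mball w \<delta> \<inter> L \<subseteq> U" using rr z C by blast
    qed
  qed
qed

lemma rat_approx: "0 < (r::real) \<Longrightarrow> \<exists>q::rat. \<bar>x - of_rat q\<bar> < r"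
proof -
  assume r: "0 < r"
  obtain t where t: "t \<in> \<rat>" "x - r < t" "t < x" using Rats_dense_in_real[of "x - r" x] r by auto
  then obtain q where "t = of_rat q" using Rats_cases by blast
  then show ?thesis using t by (intro exI[of _ q]) auto
qed

lemma rat_between: "0 < (r::real) \<Longrightarrow> \<exists>q::rat. 0 < (of_rat q::real) \<and> of_rat q < r"
proof -
  assume r: "0 < r"
  obtain t where t: "t \<in> \<rat>" "0 < t" "t < r" using Rats_dense_in_real[of 0 r] r by auto
  then obtain q where "t = of_rat q" using Rats_cases by blast
  then show ?thesis using t by auto
qed

definition rhoS :: "('b \<Rightarrow> 'b \<Rightarrow> real) \<Rightarrow> ('a \<Rightarrow> 'b) \<Rightarrow> ('a \<Rightarrow> real) set \<Rightarrow> 'a \<Rightarrow> 'a \<Rightarrow> real" where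
  "rhoS d f S x y = d (f x) (f y) + (\<Sum>\<psi>\<in>S. \<bar>\<psi> x - \<psi> y\<bar>)"

definition centers :: "('b \<Rightarrow> 'b \<Rightarrow> real) \<Rightarrow> ('a \<Rightarrow> 'b) \<Rightarrow> 'a set \<Rightarrow> ('a \<Rightarrow> real) set \<Rightarrow> nat \<Rightarrow> 'a set" where
  "centers d f K S k = (SOME C. finite C \<and> C \<subseteq> K \<and> K \<subseteq> (\<Union>c\<in>C. {y. rhoS d f S c y < 1 / real (Suc k)}))"

definition cov :: "('b \<Rightarrow> 'b \<Rightarrow> real) \<Rightarrow> ('a \<Rightarrow> 'b) \<Rightarrow> 'a set \<Rightarrow> ('a \<Rightarrow> real) set \<Rightarrow> nat \<Rightarrow> 'a set set" where
  "cov d f K S k = (\<lambda>c. K \<inter> {y. rhoS d f S c y < 1 / real (Suc k)}) ` centers d f K S k"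

definition goodseq :: "'a topology \<Rightarrow> ('b \<Rightarrow> 'b \<Rightarrow> real) \<Rightarrow> ('a \<Rightarrow> 'b) \<Rightarrow> 'a set \<Rightarrow> (('a \<Rightarrow> real) set \<times> nat) list \<Rightarrow> bool" where
  "goodseq X d f K cs \<longleftrightarrow> (\<exists>\<gamma>::nat \<Rightarrow> 'a set set.
     (\<forall>m<length cs. (\<forall>V\<in>\<gamma> m. openin (subtopology X K) V) \<and> pairwise disjnt (\<gamma> m) \<and>
        refines (\<gamma> m) (cov d f K (fst (cs!m)) (snd (cs!m)))) \<and>
     K \<subseteq> (\<Union>m<length cs. \<Union>(\<gamma> m)))"

definition realized :: "('b \<Rightarrow> 'b \<Rightarrow> real) \<Rightarrow> ('a \<Rightarrow> 'b) \<Rightarrow> 'a set \<Rightarrow> (('a \<Rightarrow> real) set \<times> nat) list \<Rightarrow> ('a \<Rightarrow> real) set \<Rightarrow> bool" where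
  "realized d f K cs P \<longleftrightarrow> (\<exists>\<gamma>::nat \<Rightarrow> 'a set set.
     (\<forall>m<length cs. (\<forall>V\<in>\<gamma> m. \<exists>Q\<subseteq>P. V = K \<inter> (\<Union>\<psi>\<in>Q. {x. 0 < \<psi> x})) \<and> pairwise disjnt (\<gamma> m) \<and>
        refines (\<gamma> m) (cov d f K (fst (cs!m)) (snd (cs!m)))) \<and>
     K \<subseteq> (\<Union>m<length cs. \<Union>(\<gamma> m)))"

lemma realize:
  assumes cr: "completely_regular_space X" and hs: "Hausdorff_space X" and K: "compactin X K"
    and g: "goodseq X d f K cs"
  shows "\<exists>P. finite P \<and> P \<subseteq> {\<psi>. continuous_map X euclideanreal \<psi>} \<and> realized d f K cs P"
proof -
  obtain \<gamma> where \<gamma>: "\<And>m. m < length cs \<Longrightarrow> (\<forall>V\<in>\<gamma> m. openin (subtopology X K) V) \<and> pairwise disjnt (\<gamma> m) \<and>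
        refines (\<gamma> m) (cov d f K (fst (cs!m)) (snd (cs!m)))"
    and cv: "K \<subseteq> (\<Union>m<length cs. \<Union>(\<gamma> m))"
    using g unfolding goodseq_def by blast
  have KX: "K \<subseteq> topspace X" using K compactin_subset_topspace by blast
  have Kc: "closedin X K" using compactin_imp_closedin[OF hs K] .
  have ex: "\<exists>m V \<psi>. m < length cs \<and> V \<in> \<gamma> m \<and> continuous_map X euclideanreal \<psi> \<and> 0 < \<psi> x \<and>
              (\<forall>y\<in>K - V. \<psi> y = 0)" if x: "x \<in> K" for x
  proof -
    obtain m V where mV: "m < length cs" "V \<in> \<gamma> m" "x \<in> V" using cv x by blast
    then have "openin (subtopology X K) V" using \<gamma> by blast
    then obtain Ob where Ob: "openin X Ob" "V = Ob \<inter> K" by (auto simp: openin_subtopology)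
    have "K - V = K - Ob" using Ob by auto
    then have C: "closedin X (K - V)"
      using Ob Kc by (simp add: closedin_diff)
    have xin: "x \<in> topspace X - (K - V)" using x KX mV by auto
    have "\<exists>g::'a\<Rightarrow>real. continuous_map X (top_of_set {0..1}) g \<and> g x = 0 \<and> g ` (K - V) \<subseteq> {1}"
      by (rule cr[unfolded completely_regular_space_def, rule_format, OF conjI[OF C xin]])
    then obtain g :: "'a \<Rightarrow> real" where g: "continuous_map X (top_of_set {0..1}) g" "g x = 0" "g ` (K - V) \<subseteq> {1}"
      by blast
    have gc: "continuous_map X euclideanreal g"
      using g(1) continuous_map_in_subtopology by blast
    show ?thesis
      using mV g gc by (intro exI[of _ m] exI[of _ V] exI[of _ "\<lambda>y. 1 - g y"]) (auto intro: continuous_intros)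
  qed
  then obtain mm VV \<Psi> where mm: "\<And>x. x \<in> K \<Longrightarrow> mm x < length cs \<and> VV x \<in> \<gamma> (mm x) \<and>
      continuous_map X euclideanreal (\<Psi> x) \<and> 0 < \<Psi> x x \<and> (\<forall>y\<in>K - VV x. \<Psi> x y = 0)"
    by metis
  have "\<exists>F. finite F \<and> F \<subseteq> (\<lambda>x. {y \<in> topspace X. 0 < \<Psi> x y}) ` K \<and> K \<subseteq> \<Union>F"
  proof (rule K[unfolded compactin_def, THEN conjunct2, rule_format], intro conjI ballI)
    fix U assume "U \<in> (\<lambda>x. {y \<in> topspace X. 0 < \<Psi> x y}) ` K"
    then obtain x where x: "x \<in> K" "U = {y \<in> topspace X. 0 < \<Psi> x y}" by blast
    show "openin X U" using mm[OF x(1)] x(2) unfolding continuous_map_upper_lower_semicontinuous_lt by blast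
  next
    show "K \<subseteq> \<Union> ((\<lambda>x. {y \<in> topspace X. 0 < \<Psi> x y}) ` K)" using mm KX by fastforce
  qed
  then obtain F where F: "finite F" "F \<subseteq> (\<lambda>x. {y \<in> topspace X. 0 < \<Psi> x y}) ` K" "K \<subseteq> \<Union>F"
    by blast
  obtain T where "T \<subseteq> K" "finite T" "F = (\<lambda>x. {y \<in> topspace X. 0 < \<Psi> x y}) ` T"
    using finite_subset_image[OF F(1) F(2)] by blast
  then have T: "finite T" "T \<subseteq> K" "K \<subseteq> (\<Union>x\<in>T. {y \<in> topspace X. 0 < \<Psi> x y})"
    using F(3) by auto
  define E where "E m V = K \<inter> (\<Union>t\<in>{t\<in>T. mm t = m \<and> VV t = V}. {x. 0 < \<Psi> t x})" for m V
  define \<gamma>' where "\<gamma>' m = E m ` \<gamma> m" for m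
  have EV: "E m V \<subseteq> V" for m V
    using mm T(2) unfolding E_def by fastforce
  show ?thesis
  proof (intro exI conjI)
    show "finite (\<Psi> ` T)" using T by simp
    show "\<Psi> ` T \<subseteq> {\<psi>. continuous_map X euclideanreal \<psi>}" using mm T by auto
    show "realized d f K cs (\<Psi> ` T)"
      unfolding realized_def
    proof (intro exI[of _ \<gamma>'] conjI allI impI ballI)
      fix m assume m: "m < length cs"
      fix W assume "W \<in> \<gamma>' m"
      then obtain V where V: "V \<in> \<gamma> m" "W = E m V" by (auto simp: \<gamma>'_def)
      show "\<exists>Q\<subseteq>\<Psi> ` T. W = K \<inter> (\<Union>\<psi>\<in>Q. {x. 0 < \<psi> x})"
        by (intro exI[of _ "\<Psi> ` {t\<in>T. mm t = m \<and> VV t = V}"]) (auto simp: V E_def)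
    next
      fix m assume m: "m < length cs"
      show "pairwise disjnt (\<gamma>' m)"
        unfolding \<gamma>'_def pairwise_image
      proof (rule pairwiseI, rule impI)
        fix V V' assume V: "V \<in> \<gamma> m" "V' \<in> \<gamma> m" "V \<noteq> V'" "E m V \<noteq> E m V'"
        then have "disjnt V V'" using \<gamma>[OF m] unfolding pairwise_def by blast
        then show "disjnt (E m V) (E m V')" using EV by (meson disjnt_subset1 disjnt_subset2)
      qed
      show "refines (\<gamma>' m) (cov d f K (fst (cs ! m)) (snd (cs ! m)))"
        unfolding refines_def \<gamma>'_def
      proof
        fix W assume "W \<in> E m ` \<gamma> m"
        then obtain V where V: "V \<in> \<gamma> m" "W = E m V" by blast
        then obtain U where "U \<in> cov d f K (fst (cs ! m)) (snd (cs ! m))" "V \<subseteq> U"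
          using \<gamma>[OF m] unfolding refines_def by blast
        then show "\<exists>U\<in>cov d f K (fst (cs ! m)) (snd (cs ! m)). W \<subseteq> U"
          using EV[of m V] V by blast
      qed
    next
      show "K \<subseteq> (\<Union>m<length cs. \<Union>(\<gamma>' m))"
      proof
        fix x assume x: "x \<in> K"
        then obtain t where t: "t \<in> T" "0 < \<Psi> t x" using T(3) by blast
        then have "x \<in> E (mm t) (VV t)" using x unfolding E_def by blast
        moreover have "E (mm t) (VV t) \<in> \<gamma>' (mm t)" using mm t T(2) unfolding \<gamma>'_def by blast
        moreover have "mm t < length cs" using mm t T(2) by blast
        ultimately show "x \<in> (\<Union>m<length cs. \<Union>(\<gamma>' m))" by blast
      qed
    qed
  qed
qed

lemma propC_discrete_finite:
  assumes "finite S"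
  shows "property_C (discrete_topology S)"
  unfolding property_C_def
proof (intro conjI allI impI)
  show "compact_space (discrete_topology S)" using assms by (simp add: compact_space_discrete_topology)
  fix \<omega> :: "nat \<Rightarrow> 'a set set"
  assume \<omega>: "\<forall>n. (\<forall>U\<in>\<omega> n. openin (discrete_topology S) U) \<and> \<Union>(\<omega> n) = topspace (discrete_topology S)"
  define \<gamma> where "\<gamma> n = (if n = 0 then (\<lambda>z. {z}) ` S else {})" for n :: nat
  show "\<exists>\<gamma>. (\<forall>n. (\<forall>V\<in>\<gamma> n. openin (discrete_topology S) V) \<and> pairwise disjnt (\<gamma> n) \<and> refines (\<gamma> n) (\<omega> n)) \<and>
          \<Union>(\<Union>n. \<gamma> n) = topspace (discrete_topology S)"
  proof (intro exI[of _ \<gamma>] conjI allI)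
    fix n
    show "\<forall>V\<in>\<gamma> n. openin (discrete_topology S) V" by (auto simp: \<gamma>_def)
    show "pairwise disjnt (\<gamma> n)" by (auto simp: \<gamma>_def pairwise_def disjnt_def)
    show "refines (\<gamma> n) (\<omega> n)"
    proof (cases "n = 0")
      case True
      have "\<Union>(\<omega> 0) = S" using \<omega> by simp
      then show ?thesis using True unfolding refines_def \<gamma>_def by auto
    qed (auto simp: refines_def \<gamma>_def)
  next
    show "\<Union>(\<Union>n. \<gamma> n) = topspace (discrete_topology S)"
    proof
      show "\<Union>(\<Union>n. \<gamma> n) \<subseteq> topspace (discrete_topology S)" by (auto simp: \<gamma>_def split: if_splits)
      show "topspace (discrete_topology S) \<subseteq> \<Union>(\<Union>n. \<gamma> n)"
      proof
        fix z assume "z \<in> topspace (discrete_topology S)"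
        then have "{z} \<in> \<gamma> 0" "z \<in> {z}" by (auto simp: \<gamma>_def)
        then show "z \<in> \<Union>(\<Union>n. \<gamma> n)" by blast
      qed
    qed
  qed
qed

lemma propC_finite:
  assumes "Hausdorff_space Z" "S \<subseteq> topspace Z" "finite S"
  shows "property_C (subtopology Z S)"
  using subtopology_eq_discrete_topology_finite[OF Hausdorff_imp_t1_space[OF assms(1)] assms(2,3)]
    propC_discrete_finite[OF assms(3)] by simp

lemma closure_family:
  assumes cr: "completely_regular_space X" and hs: "Hausdorff_space X" and K: "\<And>n::nat. compactin X (K n)"
  shows "\<exists>\<Phi>. countable \<Phi> \<and> \<Phi> \<noteq> {} \<and> \<Phi> \<subseteq> {\<psi>. continuous_map X euclideanreal \<psi>} \<and>
     (\<forall>n cs. (\<forall>c\<in>set cs. finite (fst c) \<and> fst c \<subseteq> \<Phi>) \<longrightarrow> goodseq X d f (K n) cs \<longrightarrow>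
        (\<exists>P\<subseteq>\<Phi>. realized d f (K n) cs P))"
proof -
  define Fn where "Fn = {\<psi>::'a\<Rightarrow>real. continuous_map X euclideanreal \<psi>}"
  define Sel where "Sel n cs = (SOME P. finite P \<and> P \<subseteq> Fn \<and> realized d f (K n) cs P)" for n cs
  have Sel: "finite (Sel n cs) \<and> Sel n cs \<subseteq> Fn \<and> realized d f (K n) cs (Sel n cs)"
    if "goodseq X d f (K n) cs" for n cs
    unfolding Sel_def Fn_def by (rule someI_ex, rule realize[OF cr hs K that])
  define Idx where "Idx A = {(n, cs). cs \<in> lists ({S. finite S \<and> S \<subseteq> A} \<times> UNIV) \<and> goodseq X d f (K n) cs}" for A
  define G where "G A = (\<Union>(n, cs)\<in>Idx A. Sel n cs)" for A
  define Ast where "Ast = rec_nat {\<lambda>_::'a. 0::real} (\<lambda>_ A. A \<union> G A)"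
  have Ast0: "Ast 0 = {\<lambda>_. 0}" and AstS: "Ast (Suc m) = Ast m \<union> G (Ast m)" for m
    by (simp_all add: Ast_def)
  have GFn: "G A \<subseteq> Fn" for A
    unfolding G_def Idx_def using Sel by blast
  have Gc: "countable (G A)" if "countable A" for A
  proof -
    have "Idx A \<subseteq> UNIV \<times> lists ({S. finite S \<and> S \<subseteq> A} \<times> UNIV)" by (auto simp: Idx_def)
    moreover have "countable ((UNIV::nat set) \<times> lists ({S. finite S \<and> S \<subseteq> A} \<times> (UNIV::nat set)))"
      using countable_Collect_finite_subset[OF that] by (intro countable_SIGMA countable_lists) (auto intro: countableI_type)
    ultimately have "countable (Idx A)" by (rule countable_subset)
    moreover have "countable (Sel n cs)" if "(n, cs) \<in> Idx A" for n cs
      using Sel[of n cs] that by (auto simp: Idx_def intro: countable_finite)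
    ultimately show ?thesis unfolding G_def by auto
  qed
  have AstFn: "Ast m \<subseteq> Fn" for m
    by (induction m) (auto simp: Ast0 AstS Fn_def dest: GFn[THEN subsetD])
  have Astc: "countable (Ast m)" for m
    by (induction m) (auto simp: Ast0 AstS intro: Gc)
  have Astmono: "Ast m \<subseteq> Ast m'" if "m \<le> m'" for m m'
    using lift_Suc_mono_le[of Ast, OF _ that] AstS by blast
  define \<Phi> where "\<Phi> = (\<Union>m. Ast m)"
  have fin: "\<exists>m. S \<subseteq> Ast m" if "finite S" "S \<subseteq> \<Phi>" for S
    using that
  proof (induction S rule: finite_induct)
    case empty then show ?case by blast
  next
    case (insert a S)
    then obtain m where m: "S \<subseteq> Ast m" by blast
    obtain m' where m': "a \<in> Ast m'" using insert.prems unfolding \<Phi>_def by blast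
    have "insert a S \<subseteq> Ast (max m m')"
      using m m' Astmono[of m "max m m'"] Astmono[of m' "max m m'"] by auto
    then show ?case by blast
  qed
  have finl: "\<exists>m. \<forall>c\<in>set cs. fst c \<subseteq> Ast m" if "\<forall>c\<in>set cs. finite (fst c) \<and> fst c \<subseteq> \<Phi>" for cs
    using that
  proof (induction cs)
    case Nil then show ?case by simp
  next
    case (Cons c cs)
    then obtain m where m: "\<forall>c\<in>set cs. fst c \<subseteq> Ast m" by auto
    have "finite (fst c)" "fst c \<subseteq> \<Phi>" using Cons.prems by auto
    then obtain m' where m': "fst c \<subseteq> Ast m'" using fin by blast
    have "\<forall>c\<in>set (c # cs). fst c \<subseteq> Ast (max m m')"
      using m m' Astmono[of m "max m m'"] Astmono[of m' "max m m'"] by auto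
    then show ?case by blast
  qed
  have clos: "\<exists>P\<subseteq>\<Phi>. realized d f (K n) cs P"
    if cs: "\<forall>c\<in>set cs. finite (fst c) \<and> fst c \<subseteq> \<Phi>" and g: "goodseq X d f (K n) cs" for n cs
  proof -
    obtain m where m: "\<forall>c\<in>set cs. fst c \<subseteq> Ast m" using finl[OF cs] by blast
    have "\<forall>c\<in>set cs. c \<in> {S. finite S \<and> S \<subseteq> Ast m} \<times> UNIV"
    proof
      fix c assume c: "c \<in> set cs"
      have "finite (fst c)" "fst c \<subseteq> Ast m" using c m cs by auto
      then show "c \<in> {S. finite S \<and> S \<subseteq> Ast m} \<times> UNIV" by (cases c) auto
    qed
    then have "cs \<in> lists ({S. finite S \<and> S \<subseteq> Ast m} \<times> UNIV)" by (simp add: in_lists_conv_set)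
    then have "(n, cs) \<in> Idx (Ast m)" using g by (simp add: Idx_def)
    then have "Sel n cs \<subseteq> Ast (Suc m)" unfolding AstS G_def by blast
    then have "Sel n cs \<subseteq> \<Phi>" unfolding \<Phi>_def by blast
    then show ?thesis using Sel[OF g] by blast
  qed
  have c1: "countable \<Phi>" unfolding \<Phi>_def using Astc by auto
  have c2: "\<Phi> \<noteq> {}" unfolding \<Phi>_def using Ast0 by auto
  have c3: "\<Phi> \<subseteq> {\<psi>. continuous_map X euclideanreal \<psi>}" unfolding \<Phi>_def using AstFn Fn_def by auto
  show ?thesis by (intro exI[of _ \<Phi>] conjI c1 c2 c3 allI impI clos)
qed

locale fz0 = Metric_space M d
  for M :: "'b set" and d +
  fixes X :: "'a topology" and f :: "'a \<Rightarrow> 'b"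
  assumes fc: "continuous_map X mtopology f"
begin

lemma fM: "x \<in> topspace X \<Longrightarrow> f x \<in> M"
  using fc continuous_map_image_subset_topspace by fastforce

lemma open_dball: "x \<in> topspace X \<Longrightarrow> openin X {y \<in> topspace X. d (f x) (f y) < r}"
proof -
  assume True: "x \<in> topspace X"
  have "openin X {y \<in> topspace X. f y \<in> mball (f x) r}"
    by (rule openin_continuous_map_preimage[OF fc openin_mball])
  moreover have "{y \<in> topspace X. f y \<in> mball (f x) r} = {y \<in> topspace X. d (f x) (f y) < r}"
    using fM True by auto
  ultimately show ?thesis by simp
qed

lemma cont_dist: "x \<in> topspace X \<Longrightarrow> continuous_map X euclideanreal (\<lambda>y. d (f x) (f y))"
proof -
  assume x: "x \<in> topspace X"
  have f': "continuous_map X (mtopology_of (metric (M,d))) f" using fc by simp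
  have c': "continuous_map X (mtopology_of (metric (M,d))) (\<lambda>y. f x)" using fM[OF x] by simp
  show ?thesis using continuous_map_mdist[OF c' f'] by simp
qed

lemma cont_rhoS:
  assumes c: "c \<in> topspace X" and S: "finite S" "S \<subseteq> {\<psi>. continuous_map X euclideanreal \<psi>}"
  shows "continuous_map X euclideanreal (rhoS d f S c)"
proof -
  have "continuous_map X euclideanreal (\<lambda>y. d (f c) (f y) + (\<Sum>\<psi>\<in>S. \<bar>\<psi> c - \<psi> y\<bar>))"
    using S by (intro continuous_map_add cont_dist[OF c] continuous_map_sum continuous_intros) auto
  then show ?thesis by (simp add: rhoS_def[abs_def])
qed

lemma rhoS_refl: "c \<in> topspace X \<Longrightarrow> rhoS d f S c c = 0"
  by (simp add: rhoS_def fM)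

lemma centers_exist:
  assumes K: "compactin X K" and S: "finite S" "S \<subseteq> {\<psi>. continuous_map X euclideanreal \<psi>}" and r: "0 < r"
  shows "\<exists>C. finite C \<and> C \<subseteq> K \<and> K \<subseteq> (\<Union>c\<in>C. {y. rhoS d f S c y < r})"
proof -
  have KX: "K \<subseteq> topspace X" using K compactin_subset_topspace by blast
  have "\<exists>F. finite F \<and> F \<subseteq> (\<lambda>c. {y \<in> topspace X. rhoS d f S c y < r}) ` K \<and> K \<subseteq> \<Union>F"
  proof (rule K[unfolded compactin_def, THEN conjunct2, rule_format], intro conjI ballI)
    fix U assume "U \<in> (\<lambda>c. {y \<in> topspace X. rhoS d f S c y < r}) ` K"
    then obtain c where c: "c \<in> K" "U = {y \<in> topspace X. rhoS d f S c y < r}" by blast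
    show "openin X U" using cont_rhoS[OF _ S, of c] c KX
      unfolding continuous_map_upper_lower_semicontinuous_lt by blast
  next
    show "K \<subseteq> \<Union> ((\<lambda>c. {y \<in> topspace X. rhoS d f S c y < r}) ` K)"
    proof
      fix x assume x: "x \<in> K"
      then have "x \<in> {y \<in> topspace X. rhoS d f S x y < r}" using KX rhoS_refl r by auto
      then show "x \<in> \<Union> ((\<lambda>c. {y \<in> topspace X. rhoS d f S c y < r}) ` K)" using x by blast
    qed
  qed
  then obtain F where F: "finite F" "F \<subseteq> (\<lambda>c. {y \<in> topspace X. rhoS d f S c y < r}) ` K" "K \<subseteq> \<Union>F"
    by blast
  obtain C where "C \<subseteq> K" "finite C" "F = (\<lambda>c. {y \<in> topspace X. rhoS d f S c y < r}) ` C"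
    using finite_subset_image[OF F(1) F(2)] by blast
  then have C: "finite C" "C \<subseteq> K" "K \<subseteq> (\<Union>c\<in>C. {y \<in> topspace X. rhoS d f S c y < r})"
    using F(3) by auto
  then show ?thesis by (intro exI[of _ C]) auto
qed

lemma centers_prop:
  assumes K: "compactin X K" and S: "finite S" "S \<subseteq> {\<psi>. continuous_map X euclideanreal \<psi>}"
  shows "finite (centers d f K S k) \<and> centers d f K S k \<subseteq> K \<and>
     K \<subseteq> (\<Union>c\<in>centers d f K S k. {y. rhoS d f S c y < 1 / real (Suc k)})"
  unfolding centers_def by (rule someI_ex, rule centers_exist[OF K S]) auto

lemma cov_open:
  assumes K: "compactin X K" and S: "finite S" "S \<subseteq> {\<psi>. continuous_map X euclideanreal \<psi>}"
    and B: "B \<in> cov d f K S k"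
  shows "openin (subtopology X K) B"
proof -
  have KX: "K \<subseteq> topspace X" using K compactin_subset_topspace by blast
  obtain c where c: "c \<in> centers d f K S k" "B = K \<inter> {y. rhoS d f S c y < 1 / real (Suc k)}"
    using B unfolding cov_def by blast
  have cK: "c \<in> topspace X" using c centers_prop[OF K S] KX by blast
  have "openin X {y \<in> topspace X. rhoS d f S c y < 1 / real (Suc k)}"
    using cont_rhoS[OF cK S] unfolding continuous_map_upper_lower_semicontinuous_lt by blast
  then have "openin (subtopology X K) (K \<inter> {y \<in> topspace X. rhoS d f S c y < 1 / real (Suc k)})"
    by (rule openin_subtopology_Int2)
  moreover have "K \<inter> {y \<in> topspace X. rhoS d f S c y < 1 / real (Suc k)} = B" using c KX by auto
  ultimately show ?thesis by simp
qed

lemma cov_union: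
  assumes K: "compactin X K" and S: "finite S" "S \<subseteq> {\<psi>. continuous_map X euclideanreal \<psi>}"
  shows "\<Union>(cov d f K S k) = K"
  using centers_prop[OF K S, of k] unfolding cov_def by blast

end

locale fz = fz0 M d X f
  for M :: "'b set" and d and X :: "'a topology" and f +
  fixes \<phi> :: "nat \<Rightarrow> 'a \<Rightarrow> real"
  assumes \<phi>c: "\<And>i. continuous_map X euclideanreal (\<phi> i)"
begin

definition rho where "rho x y = d (f x) (f y) + suminf (sterm \<phi> x y)"
definition hh where "hh x = {y \<in> topspace X. rho x y = 0}"
definition rep :: "'a set \<Rightarrow> 'a" where "rep A = (SOME x. x \<in> A)"
definition DD where "DD A B = rho (rep A) (rep B)"
definition ZM where "ZM = hh ` topspace X"
definition gg where "gg A = f (rep A)"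
definition phit where "phit i A = \<phi> i (rep A)"

lemma rho_nonneg: "0 \<le> rho x y"
  by (simp add: rho_def suminf_sterm_nonneg)

lemma rho_commute: "rho x y = rho y x"
proof -
  have "sterm \<phi> x y = sterm \<phi> y x" by (rule ext) (rule sterm_commute)
  then show ?thesis by (simp add: rho_def commute)
qed

lemma rho_refl: "x \<in> topspace X \<Longrightarrow> rho x x = 0"
proof -
  have "sterm \<phi> x x = (\<lambda>i. 0)" by (rule ext) (simp add: sterm_def)
  then show "x \<in> topspace X \<Longrightarrow> rho x x = 0" by (simp add: rho_def fM)
qed

lemma rho_triangle: "x \<in> topspace X \<Longrightarrow> y \<in> topspace X \<Longrightarrow> z \<in> topspace X \<Longrightarrow> rho x z \<le> rho x y + rho y z"
  unfolding rho_def using triangle[OF fM fM fM, of x y z] suminf_sterm_triangle[of \<phi> x z y] by linarith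

lemma hh_self: "x \<in> topspace X \<Longrightarrow> x \<in> hh x"
  by (simp add: hh_def rho_refl)

lemma rep_hh: "x \<in> topspace X \<Longrightarrow> rep (hh x) \<in> topspace X \<and> rho x (rep (hh x)) = 0"
proof -
  assume x: "x \<in> topspace X"
  then have "rep (hh x) \<in> hh x" unfolding rep_def by (rule someI[of "\<lambda>z. z \<in> hh x" x, OF hh_self])
  then show ?thesis by (simp add: hh_def)
qed

lemma rho_zero_cong: "x \<in> topspace X \<Longrightarrow> x' \<in> topspace X \<Longrightarrow> y \<in> topspace X \<Longrightarrow> rho x x' = 0 \<Longrightarrow> rho x y = rho x' y"
  using rho_triangle[of x x' y] rho_triangle[of x' x y] rho_commute[of x x'] by linarith

lemma DD_hh: "x \<in> topspace X \<Longrightarrow> y \<in> topspace X \<Longrightarrow> DD (hh x) (hh y) = rho x y"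
proof -
  assume x: "x \<in> topspace X" and y: "y \<in> topspace X"
  define a where "a = rep (hh x)"
  define b where "b = rep (hh y)"
  have a: "a \<in> topspace X" "rho x a = 0" using rep_hh[OF x] a_def by auto
  have b: "b \<in> topspace X" "rho y b = 0" using rep_hh[OF y] b_def by auto
  have "DD (hh x) (hh y) = rho a b" by (simp add: DD_def a_def b_def)
  also have "\<dots> = rho x b" using rho_zero_cong[OF x a(1) b(1) a(2)] by simp
  also have "\<dots> = rho b x" by (rule rho_commute)
  also have "\<dots> = rho y x" using rho_zero_cong[OF y b(1) x b(2)] by simp
  also have "\<dots> = rho x y" by (rule rho_commute)
  finally show ?thesis .
qed

lemma hh_eq_iff: "x \<in> topspace X \<Longrightarrow> y \<in> topspace X \<Longrightarrow> hh x = hh y \<longleftrightarrow> rho x y = 0"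
proof
  assume x: "x \<in> topspace X" and y: "y \<in> topspace X" and "hh x = hh y"
  then have "y \<in> hh x" using hh_self by auto
  then show "rho x y = 0" by (simp add: hh_def)
next
  assume x: "x \<in> topspace X" and y: "y \<in> topspace X" and r: "rho x y = 0"
  show "hh x = hh y"
    unfolding hh_def using rho_zero_cong[OF x y _ r] by auto
qed

lemma ZM_cases: "A \<in> ZM \<Longrightarrow> (\<And>x. x \<in> topspace X \<Longrightarrow> A = hh x \<Longrightarrow> P) \<Longrightarrow> P"
  unfolding ZM_def by blast

sublocale Z: Metric_space ZM DD
proof
  fix A B C
  show "0 \<le> DD A B" by (simp add: DD_def rho_nonneg)
  show "DD A B = DD B A" by (simp add: DD_def rho_commute)
  show "A \<in> ZM \<Longrightarrow> B \<in> ZM \<Longrightarrow> (DD A B = 0) = (A = B)"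
    by (elim ZM_cases) (simp add: DD_hh hh_eq_iff)
  show "A \<in> ZM \<Longrightarrow> B \<in> ZM \<Longrightarrow> C \<in> ZM \<Longrightarrow> DD A C \<le> DD A B + DD B C"
    by (auto elim!: ZM_cases simp: DD_hh rho_triangle)
qed

lemma rho_zero_f: "x \<in> topspace X \<Longrightarrow> y \<in> topspace X \<Longrightarrow> rho x y = 0 \<Longrightarrow> f x = f y"
  unfolding rho_def using suminf_sterm_nonneg[of \<phi> x y] nonneg[of "f x" "f y"] zero[OF fM fM, of x y]
  by linarith

lemma rho_zero_phi: "rho x y = 0 \<Longrightarrow> \<phi> i x = \<phi> i y"
  unfolding rho_def using suminf_sterm_nonneg[of \<phi> x y] nonneg[of "f x" "f y"] suminf_sterm_zero[of \<phi> x y i]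
  by linarith

lemma gg_hh: "x \<in> topspace X \<Longrightarrow> gg (hh x) = f x"
  unfolding gg_def using rep_hh rho_zero_f by metis

lemma phit_hh: "x \<in> topspace X \<Longrightarrow> phit i (hh x) = \<phi> i x"
  unfolding phit_def using rep_hh rho_zero_phi by metis

lemma d_le_rho: "d (f x) (f y) \<le> rho x y"
  unfolding rho_def using suminf_sterm_nonneg[of \<phi> x y] by linarith

lemma sterm_le_rho: "sterm \<phi> x y i \<le> rho x y"
  unfolding rho_def using sterm_single[of \<phi> x y i] nonneg[of "f x" "f y"] by linarith

lemma open_phiball: "openin X {y \<in> topspace X. \<bar>\<phi> i x - \<phi> i y\<bar> < r}"
proof -
  have "continuous_map X euclideanreal (\<lambda>y. \<bar>\<phi> i x - \<phi> i y\<bar>)"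
    by (intro continuous_intros \<phi>c) 
  then show ?thesis unfolding continuous_map_upper_lower_semicontinuous_lt by blast
qed


lemma hh_ZM: "x \<in> topspace X \<Longrightarrow> hh x \<in> ZM"
  by (simp add: ZM_def)

lemma cont_hh: "continuous_map X Z.mtopology hh"
  unfolding Z.continuous_map_to_metric
proof (intro ballI allI impI)
  fix x and \<epsilon> :: real
  assume x: "x \<in> topspace X" and e: "\<epsilon> > 0"
  obtain j where j: "(1/2::real)^j < \<epsilon>/6"
    using real_arch_pow_inv[of "\<epsilon>/6" "1/2::real"] e by auto
  define U where "U = {y\<in>topspace X. d (f x) (f y) < \<epsilon>/3} \<inter>
      ((\<Inter>i\<in>{..<j}. {y\<in>topspace X. \<bar>\<phi> i x - \<phi> i y\<bar> < \<epsilon>/6}) \<inter> topspace X)"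
  have "openin X U" unfolding U_def
    by (intro openin_Int open_dball[OF x] openin_INT open_phiball) auto
  moreover have "x \<in> U" using x e fM[OF x] by (auto simp: U_def)
  moreover have "\<forall>y\<in>U. hh y \<in> Z.mball (hh x) \<epsilon>"
  proof
    fix y assume y: "y \<in> U"
    then have yX: "y \<in> topspace X" by (auto simp: U_def)
    have "sum (sterm \<phi> x y) {..<j} \<le> (\<Sum>i<j. (1/2)^i * (\<epsilon>/6))"
    proof (rule sum_mono)
      fix i assume "i \<in> {..<j}"
      then have "\<bar>\<phi> i x - \<phi> i y\<bar> < \<epsilon>/6" using y by (auto simp: U_def)
      then show "sterm \<phi> x y i \<le> (1/2)^i * (\<epsilon>/6)"
        using sterm_le_abs[of \<phi> x y i] by (smt (verit) mult_left_mono zero_le_divide_1_iff zero_le_power)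
    qed
    also have "\<dots> = (\<epsilon>/6) * (\<Sum>i<j. (1/2::real)^i)" by (simp add: sum_distrib_left mult.commute)
    also have "\<dots> \<le> (\<epsilon>/6) * 2" using geom_sum_le2[of j] e by (intro mult_left_mono) auto
    finally have s: "sum (sterm \<phi> x y) {..<j} \<le> \<epsilon>/3" by simp
    have "rho x y < \<epsilon>"
      unfolding rho_def using sterm_tail[of \<phi> x y j] s j y by (auto simp: U_def)
    then show "hh y \<in> Z.mball (hh x) \<epsilon>"
      using DD_hh[OF x yX] hh_ZM[OF x] hh_ZM[OF yX] by simp
  qed
  ultimately show "\<exists>U. openin X U \<and> x \<in> U \<and> (\<forall>y\<in>U. hh y \<in> Z.mball (hh x) \<epsilon>)" by blast
qed

lemma rep_in: "A \<in> ZM \<Longrightarrow> rep A \<in> topspace X"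
  by (auto elim!: ZM_cases simp: rep_hh)

lemma cont_gg: "continuous_map Z.mtopology mtopology gg"
  unfolding continuous_map_to_metric
proof (intro ballI allI impI)
  fix A and \<epsilon> :: real
  assume A: "A \<in> topspace Z.mtopology" and e: "\<epsilon> > 0"
  show "\<exists>U. openin Z.mtopology U \<and> A \<in> U \<and> (\<forall>y\<in>U. gg y \<in> mball (gg A) \<epsilon>)"
  proof (intro exI conjI ballI)
    show "openin Z.mtopology (Z.mball A \<epsilon>)" by simp
    show "A \<in> Z.mball A \<epsilon>" using A e by simp
    fix B assume "B \<in> Z.mball A \<epsilon>"
    then have B: "B \<in> ZM" "DD A B < \<epsilon>" and A': "A \<in> ZM" by auto
    show "gg B \<in> mball (gg A) \<epsilon>"
      using d_le_rho[of "rep A" "rep B"] B A' rep_in fM unfolding gg_def DD_def by fastforce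
  qed
qed

lemma cont_phit: "continuous_map Z.mtopology euclideanreal (phit i)"
proof -
  have "continuous_map Z.mtopology Met_TC.mtopology (phit i)"
  unfolding Met_TC.continuous_map_to_metric
  proof (intro ballI allI impI)
    fix A and \<epsilon> :: real
    assume A: "A \<in> topspace Z.mtopology" and e: "\<epsilon> > 0"
    show "\<exists>U. openin Z.mtopology U \<and> A \<in> U \<and> (\<forall>y\<in>U. phit i y \<in> Met_TC.mball (phit i A) \<epsilon>)"
    proof (intro exI conjI ballI)
      show "openin Z.mtopology (Z.mball A ((1/2)^i * min 1 \<epsilon>))" by simp
      show "A \<in> Z.mball A ((1/2)^i * min 1 \<epsilon>)" using A e by simp
      fix B assume "B \<in> Z.mball A ((1/2)^i * min 1 \<epsilon>)"
      then have "DD A B < (1/2)^i * min 1 \<epsilon>" by auto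
      then have "sterm \<phi> (rep A) (rep B) i < (1/2)^i * min 1 \<epsilon>"
        using sterm_le_rho[of "rep A" "rep B" i] unfolding DD_def by linarith
      then have "min 1 \<bar>\<phi> i (rep A) - \<phi> i (rep B)\<bar> < min 1 \<epsilon>"
        unfolding sterm_def by simp
      then have "\<bar>\<phi> i (rep A) - \<phi> i (rep B)\<bar> < \<epsilon>" by linarith
      then show "phit i B \<in> Met_TC.mball (phit i A) \<epsilon>"
        by (simp add: phit_def dist_real_def)
    qed
  qed
  then show ?thesis by simp
qed


lemma rho_bound:
  assumes "d (f x) (f y) < a" "\<And>i. i < j \<Longrightarrow> \<bar>\<phi> i x - \<phi> i y\<bar> \<le> b" and b: "0 \<le> b"
  shows "rho x y < a + 2 * b + 2 * (1/2)^j"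
proof -
  have "sum (sterm \<phi> x y) {..<j} \<le> (\<Sum>i<j. (1/2)^i * b)"
  proof (rule sum_mono)
    fix i assume "i \<in> {..<j}"
    then have "\<bar>\<phi> i x - \<phi> i y\<bar> \<le> b" using assms(2) by auto
    then show "sterm \<phi> x y i \<le> (1/2)^i * b"
      using sterm_le_abs[of \<phi> x y i] by (smt (verit) mult_left_mono zero_le_divide_1_iff zero_le_power)
  qed
  also have "\<dots> = b * (\<Sum>i<j. (1/2::real)^i)" by (simp add: sum_distrib_left mult.commute)
  also have "\<dots> \<le> b * 2" using geom_sum_le2[of j] b by (intro mult_left_mono) auto
  finally have s: "sum (sterm \<phi> x y) {..<j} \<le> 2 * b" by simp
  show ?thesis
    unfolding rho_def using sterm_tail[of \<phi> x y j] s assms(1) by auto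
qed

definition Bset :: "'b set \<Rightarrow> rat list \<Rightarrow> rat \<Rightarrow> 'a set set" where
  "Bset U qs r = {A \<in> topspace Z.mtopology. gg A \<in> U} \<inter>
     ((\<Inter>i\<in>{..<length qs}. {A \<in> topspace Z.mtopology. \<bar>phit i A - of_rat (qs!i)\<bar> < of_rat r}) \<inter> topspace Z.mtopology)"

lemma open_phit_ball: "openin Z.mtopology {A \<in> topspace Z.mtopology. \<bar>phit i A - c\<bar> < r}"
proof -
  have "continuous_map Z.mtopology euclideanreal (\<lambda>A. \<bar>phit i A - c\<bar>)"
    by (intro continuous_intros cont_phit) 
  then show ?thesis unfolding continuous_map_upper_lower_semicontinuous_lt by blast
qed

lemma Bset_open: "openin mtopology U \<Longrightarrow> openin Z.mtopology (Bset U qs r)"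
  unfolding Bset_def
  by (intro openin_Int openin_INT open_phit_ball openin_continuous_map_preimage[OF cont_gg]) auto

lemma base_Z:
  assumes BY: "is_base_of mtopology BY"
  shows "is_base_of Z.mtopology ((\<lambda>(U,qs,r). Bset U qs r) ` (BY \<times> UNIV))"
  unfolding is_base_of_def
proof (intro conjI ballI allI impI)
  fix B assume "B \<in> (\<lambda>(U,qs,r). Bset U qs r) ` (BY \<times> UNIV)"
  then show "openin Z.mtopology B" using BY Bset_open unfolding is_base_of_def by auto
next
  fix Op assume Op: "openin Z.mtopology Op"
  have key: "\<exists>B\<in>(\<lambda>(U,qs,r). Bset U qs r) ` (BY \<times> UNIV). A \<in> B \<and> B \<subseteq> Op" if A: "A \<in> Op" for A
  proof -
    obtain \<epsilon> where e: "\<epsilon> > 0" "Z.mball A \<epsilon> \<subseteq> Op" using Op A Z.openin_mtopology by metis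
    have AZ: "A \<in> ZM" using Op A Z.openin_mtopology by auto
    obtain j where j: "(1/2::real)^j < \<epsilon>/8"
      using real_arch_pow_inv[of "\<epsilon>/8" "1/2::real"] e by auto
    have gA: "gg A \<in> M" using AZ rep_in fM unfolding gg_def by auto
    obtain C where C: "C \<subseteq> BY" "\<Union>C = mball (gg A) (\<epsilon>/4)"
      using BY unfolding is_base_of_def by (meson openin_mball)
    then obtain U where U: "U \<in> BY" "gg A \<in> U" "U \<subseteq> mball (gg A) (\<epsilon>/4)"
      using gA e by (metis UnionE Union_upper centre_in_mball_iff subsetD zero_less_divide_iff zero_less_numeral)
    obtain r :: rat where r: "0 < (of_rat r::real)" "of_rat r < \<epsilon>/8"
      using rat_between[of "\<epsilon>/8"] e by auto
    have "\<forall>i. \<exists>q::rat. \<bar>phit i A - of_rat q\<bar> < of_rat r" using rat_approx r(1) by blast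
    then obtain q :: "nat \<Rightarrow> rat" where q: "\<And>i. \<bar>phit i A - of_rat (q i)\<bar> < of_rat r" by metis
    define qs where "qs = map q [0..<j]"
    have "A \<in> Bset U qs r" using AZ U q by (auto simp: Bset_def qs_def)
    moreover have "Bset U qs r \<subseteq> Op"
    proof
      fix B assume B: "B \<in> Bset U qs r"
      then have BZ: "B \<in> ZM" and gB: "gg B \<in> U" by (auto simp: Bset_def)
      have "\<bar>phit i B - of_rat (q i)\<bar> < of_rat r" if "i < j" for i
        using B that by (auto simp: Bset_def qs_def)
      then have ph: "\<bar>\<phi> i (rep A) - \<phi> i (rep B)\<bar> \<le> \<epsilon>/4" if "i < j" for i
      proof -
        have "\<bar>\<phi> i (rep B) - of_rat (q i)\<bar> < of_rat r" "\<bar>\<phi> i (rep A) - of_rat (q i)\<bar> < of_rat r"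
          using q[of i] that \<open>\<And>i. i < j \<Longrightarrow> _\<close> unfolding phit_def by auto
        then show ?thesis using r by linarith
      qed
      have "d (f (rep A)) (f (rep B)) < \<epsilon>/4" using gB U by (auto simp: gg_def)
      then have "DD A B < \<epsilon>/4 + 2 * (\<epsilon>/4) + 2 * (1/2)^j"
        unfolding DD_def using rho_bound[of "rep A" "rep B" "\<epsilon>/4" j "\<epsilon>/4", OF _ ph] e by auto
      then have "DD A B < \<epsilon>" using j by linarith
      then show "B \<in> Op" using e AZ BZ by auto
    qed
    ultimately show ?thesis using U(1) by (intro bexI[of _ "Bset U qs r"]) auto
  qed
  show "\<exists>C\<subseteq>(\<lambda>(U,qs,r). Bset U qs r) ` (BY \<times> UNIV). \<Union>C = Op"
    by (intro exI[of _ "{B\<in>(\<lambda>(U,qs,r). Bset U qs r) ` (BY \<times> UNIV). B \<subseteq> Op}"]) (use key in blast)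
qed


lemma rho_le_rhoS:
  assumes "x \<in> topspace X" "y \<in> topspace X"
  shows "rho x y \<le> 2 * rhoS d f (\<phi> ` {..<j}) x y + 2 * (1/2)^j"
proof -
  define T where "T = (\<Sum>\<psi>\<in>\<phi> ` {..<j}. \<bar>\<psi> x - \<psi> y\<bar>)"
  have T0: "0 \<le> T" unfolding T_def by (intro sum_nonneg) auto
  have "sum (sterm \<phi> x y) {..<j} \<le> (\<Sum>i<j. (1/2)^i * T)"
  proof (rule sum_mono)
    fix i assume i: "i \<in> {..<j}"
    have "\<bar>\<phi> i x - \<phi> i y\<bar> \<le> T" unfolding T_def
      by (rule member_le_sum[of "\<phi> i" _ "\<lambda>\<psi>. \<bar>\<psi> x - \<psi> y\<bar>"]) (use i in auto)
    then show "sterm \<phi> x y i \<le> (1/2)^i * T"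
      using sterm_le_abs[of \<phi> x y i] by (smt (verit) mult_left_mono zero_le_divide_1_iff zero_le_power)
  qed
  also have "\<dots> = T * (\<Sum>i<j. (1/2::real)^i)" by (simp add: sum_distrib_left mult.commute)
  also have "\<dots> \<le> T * 2" using geom_sum_le2[of j] T0 by (intro mult_left_mono) auto
  finally have s: "sum (sterm \<phi> x y) {..<j} \<le> 2 * T" by simp
  have d0: "0 \<le> d (f x) (f y)" by simp
  have r1: "rho x y \<le> d (f x) (f y) + 2 * T + 2 * (1/2)^j"
    unfolding rho_def using sterm_tail[of \<phi> x y j] s by linarith
  have r2: "rhoS d f (\<phi> ` {..<j}) x y = d (f x) (f y) + T" by (simp add: rhoS_def T_def)
  show ?thesis using r1 r2 d0 by linarith
qed

lemma phi_cong: "x \<in> topspace X \<Longrightarrow> x' \<in> topspace X \<Longrightarrow> hh x = hh x' \<Longrightarrow> \<psi> \<in> range \<phi> \<Longrightarrow> \<psi> x = \<psi> x'"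
  using hh_eq_iff rho_zero_phi by auto

lemma sat:
  assumes KX: "K \<subseteq> topspace X" and Q: "Q \<subseteq> range \<phi>" and x: "x \<in> K" and x': "x' \<in> K \<inter> (\<Union>\<psi>\<in>Q. {x. 0 < \<psi> x})"
    and h: "hh x = hh x'"
  shows "x \<in> K \<inter> (\<Union>\<psi>\<in>Q. {x. 0 < \<psi> x})"
proof -
  obtain \<psi> where "\<psi> \<in> Q" "0 < \<psi> x'" using x' by blast
  moreover have "\<psi> x = \<psi> x'" if "\<psi> \<in> Q" for \<psi> using phi_cong[OF _ _ h] x x' KX Q that by blast
  ultimately have "\<psi> \<in> Q" "0 < \<psi> x" by metis+
  then show ?thesis using x by blast
qed

lemma hh_image_form:
  assumes KX: "K \<subseteq> topspace X" and Q: "Q \<subseteq> range \<phi>"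
  shows "hh ` (K \<inter> (\<Union>\<psi>\<in>Q. {x. 0 < \<psi> x})) = hh ` K \<inter> (\<Union>\<psi>\<in>Q. {A \<in> topspace Z.mtopology. 0 < \<psi> (rep A)})"
proof -
  have e: "\<psi> (rep (hh x)) = \<psi> x" if "x \<in> topspace X" "\<psi> \<in> Q" for x \<psi>
    using that Q phit_hh unfolding phit_def by blast
  show ?thesis
  proof
    show "hh ` (K \<inter> (\<Union>\<psi>\<in>Q. {x. 0 < \<psi> x})) \<subseteq> hh ` K \<inter> (\<Union>\<psi>\<in>Q. {A \<in> topspace Z.mtopology. 0 < \<psi> (rep A)})"
    proof
      fix A assume "A \<in> hh ` (K \<inter> (\<Union>\<psi>\<in>Q. {x. 0 < \<psi> x}))"
      then obtain x \<psi> where x: "x \<in> K" "A = hh x" "\<psi> \<in> Q" "0 < \<psi> x" by blast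
      then have xX: "x \<in> topspace X" using KX by blast
      have "A \<in> {A \<in> topspace Z.mtopology. 0 < \<psi> (rep A)}" using x e[OF xX x(3)] hh_ZM[OF xX] by simp
      then show "A \<in> hh ` K \<inter> (\<Union>\<psi>\<in>Q. {A \<in> topspace Z.mtopology. 0 < \<psi> (rep A)})" using x by blast
    qed
    show "hh ` K \<inter> (\<Union>\<psi>\<in>Q. {A \<in> topspace Z.mtopology. 0 < \<psi> (rep A)}) \<subseteq> hh ` (K \<inter> (\<Union>\<psi>\<in>Q. {x. 0 < \<psi> x}))"
    proof
      fix A assume A: "A \<in> hh ` K \<inter> (\<Union>\<psi>\<in>Q. {A \<in> topspace Z.mtopology. 0 < \<psi> (rep A)})"
      then obtain x \<psi> where x: "x \<in> K" "A = hh x" "\<psi> \<in> Q" "0 < \<psi> (rep A)" by blast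
      then have xX: "x \<in> topspace X" using KX by blast
      have "\<psi> x = \<psi> (rep A)" using e[OF xX x(3)] x(2) by simp
      then have "0 < \<psi> x" using x by simp
      then show "A \<in> hh ` (K \<inter> (\<Union>\<psi>\<in>Q. {x. 0 < \<psi> x}))" using x by blast
    qed
  qed
qed

lemma open_pos_rep: "\<psi> \<in> range \<phi> \<Longrightarrow> openin Z.mtopology {A \<in> topspace Z.mtopology. 0 < \<psi> (rep A)}"
proof -
  assume "\<psi> \<in> range \<phi>"
  then obtain i where i: "\<psi> = \<phi> i" by blast
  have "openin Z.mtopology {A \<in> topspace Z.mtopology. 0 < phit i A}"
    using cont_phit[of i] unfolding continuous_map_upper_lower_semicontinuous_lt by blast
  then show ?thesis by (simp add: i phit_def)
qed


lemma propC:
  assumes K: "compactin X K" and pc: "property_C (subtopology X K)"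
    and clos: "\<And>cs. (\<forall>c\<in>set cs. finite (fst c) \<and> fst c \<subseteq> range \<phi>) \<Longrightarrow> goodseq X d f K cs \<Longrightarrow>
                 \<exists>P\<subseteq>range \<phi>. realized d f K cs P"
  shows "property_C (subtopology Z.mtopology (hh ` K))"
proof -
  have KX: "K \<subseteq> topspace X" using K compactin_subset_topspace by blast
  define L where "L = hh ` K"
  have LZ: "L \<subseteq> ZM" using KX hh_ZM unfolding L_def by blast
  have Lc: "compactin Z.mtopology L" unfolding L_def by (rule image_compactin[OF K cont_hh])
  have tsL: "topspace (subtopology Z.mtopology L) = L" using LZ by auto
  have tsK: "topspace (subtopology X K) = K" using KX by auto
  have Fn: "range \<phi> \<subseteq> {\<psi>. continuous_map X euclideanreal \<psi>}" using \<phi>c by auto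
  show ?thesis
    unfolding property_C_def L_def[symmetric]
  proof (intro conjI allI impI)
    show "compact_space (subtopology Z.mtopology L)" by (rule compact_space_subtopology[OF Lc])
    fix \<omega> :: "nat \<Rightarrow> 'a set set set"
    assume \<omega>: "\<forall>n. (\<forall>U\<in>\<omega> n. openin (subtopology Z.mtopology L) U) \<and> \<Union>(\<omega> n) = topspace (subtopology Z.mtopology L)"
    have "\<exists>\<delta>>0. \<forall>z\<in>L. \<exists>U\<in>\<omega> m. Z.mball z \<delta> \<inter> L \<subseteq> U" for m
      using \<omega> tsL by (intro Z.lebesgue_cover[OF Lc]) auto
    then obtain \<delta> where \<delta>: "\<And>m. \<delta> m > 0" "\<And>m z. z \<in> L \<Longrightarrow> \<exists>U\<in>\<omega> m. Z.mball z (\<delta> m) \<inter> L \<subseteq> U"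
      by metis
    have "\<exists>j. (1/2::real)^j < \<delta> m / 4" for m
      using real_arch_pow_inv[of "\<delta> m / 4" "1/2::real"] \<delta>(1)[of m] by auto
    then obtain j where j: "\<And>m. (1/2::real)^(j m) < \<delta> m / 4" by metis
    have "\<exists>k. 1 / real (Suc k) < \<delta> m / 8" for m
    proof -
      obtain n :: nat where "n > 0" "inverse (real n) < \<delta> m / 8"
        using ex_inverse_of_nat_less[of "\<delta> m / 8"] \<delta>(1)[of m] by auto
      then show ?thesis by (intro exI[of _ "n - 1"]) (simp add: inverse_eq_divide)
    qed
    then obtain k where k: "\<And>m. 1 / real (Suc (k m)) < \<delta> m / 8" by metis
    define S where "S m = \<phi> ` {..<j m}" for m
    have Sf: "finite (S m)" "S m \<subseteq> range \<phi>" "S m \<subseteq> {\<psi>. continuous_map X euclideanreal \<psi>}" for m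
      using Fn by (auto simp: S_def)
    have R: "\<exists>U\<in>\<omega> m. hh ` B \<subseteq> U" if B: "B \<in> cov d f K (S m) (k m)" for m B
    proof -
      obtain c where c: "c \<in> centers d f K (S m) (k m)" "B = K \<inter> {y. rhoS d f (S m) c y < 1 / real (Suc (k m))}"
        using B unfolding cov_def by blast
      have cK: "c \<in> K" using c(1) centers_prop[OF K Sf(1) Sf(3)] by blast
      then have cX: "c \<in> topspace X" using KX by blast
      obtain U where U: "U \<in> \<omega> m" "Z.mball (hh c) (\<delta> m) \<inter> L \<subseteq> U"
        using \<delta>(2)[of "hh c" m] cK unfolding L_def by blast
      have "hh ` B \<subseteq> U"
      proof
        fix A assume "A \<in> hh ` B"
        then obtain y where y: "y \<in> K" "rhoS d f (S m) c y < 1 / real (Suc (k m))" "A = hh y"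
          using c by blast
        have yX: "y \<in> topspace X" using y KX by blast
        have "rho c y \<le> 2 * rhoS d f (S m) c y + 2 * (1/2)^(j m)"
          unfolding S_def by (rule rho_le_rhoS[OF cX yX])
        also have "\<dots> < \<delta> m" using y(2) j[of m] k[of m] \<delta>(1)[of m] by linarith
        finally have "DD (hh c) (hh y) < \<delta> m" using DD_hh[OF cX yX] by simp
        then have "A \<in> Z.mball (hh c) (\<delta> m) \<inter> L"
          using y hh_ZM[OF cX] hh_ZM[OF yX] unfolding L_def by auto
        then show "A \<in> U" using U by blast
      qed
      then show ?thesis using U by blast
    qed
    have "\<exists>\<gamma>::nat \<Rightarrow> 'a set set.
           (\<forall>n. (\<forall>V\<in>\<gamma> n. openin (subtopology X K) V) \<and> pairwise disjnt (\<gamma> n) \<and> refines (\<gamma> n) (cov d f K (S n) (k n))) \<and>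
           \<Union>(\<Union>n. \<gamma> n) = topspace (subtopology X K)"
    proof -
      have hyp: "\<forall>n. (\<forall>U\<in>cov d f K (S n) (k n). openin (subtopology X K) U) \<and>
                   \<Union>(cov d f K (S n) (k n)) = topspace (subtopology X K)"
        using cov_open[OF K Sf(1) Sf(3)] cov_union[OF K Sf(1) Sf(3)] tsK by simp
      have pc2: "\<forall>\<omega> :: nat \<Rightarrow> 'a set set.
        (\<forall>n. (\<forall>U\<in>\<omega> n. openin (subtopology X K) U) \<and> \<Union>(\<omega> n) = topspace (subtopology X K)) \<longrightarrow>
        (\<exists>\<gamma> :: nat \<Rightarrow> 'a set set.
           (\<forall>n. (\<forall>V\<in>\<gamma> n. openin (subtopology X K) V) \<and> pairwise disjnt (\<gamma> n) \<and> refines (\<gamma> n) (\<omega> n)) \<and>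
           \<Union>(\<Union>n. \<gamma> n) = topspace (subtopology X K))"
        using pc unfolding property_C_def by (rule conjunct2)
      show ?thesis using mp[OF spec[OF pc2, of "\<lambda>n. cov d f K (S n) (k n)"] hyp] by simp
    qed
    then obtain \<gamma> :: "nat \<Rightarrow> 'a set set" where
      \<gamma>: "\<And>n. (\<forall>V\<in>\<gamma> n. openin (subtopology X K) V) \<and> pairwise disjnt (\<gamma> n) \<and> refines (\<gamma> n) (cov d f K (S n) (k n))"
      and \<gamma>c: "\<Union>(\<Union>n. \<gamma> n) = K" using tsK by auto
    \<comment> \<open>compactness: finitely many stages suffice\<close>
    have "compact_space (subtopology X K)" by (rule compact_space_subtopology[OF K])
    then have "\<exists>F. finite F \<and> F \<subseteq> (\<Union>n. \<gamma> n) \<and> topspace (subtopology X K) \<subseteq> \<Union>F"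
    proof -
      have h: "(\<forall>U\<in>(\<Union>n. \<gamma> n). openin (subtopology X K) U) \<and> topspace (subtopology X K) \<subseteq> \<Union>(\<Union>n. \<gamma> n)"
        using \<gamma> \<gamma>c tsK by blast
      show ?thesis using \<open>compact_space (subtopology X K)\<close>[unfolded compact_space_alt, rule_format, OF h] .
    qed
    then obtain F where F: "finite F" "F \<subseteq> (\<Union>n. \<gamma> n)" "K \<subseteq> \<Union>F" using tsK by auto
    have "\<forall>V\<in>F. \<exists>n. V \<in> \<gamma> n" using F(2) by blast
    then obtain mv where mv: "\<And>V. V \<in> F \<Longrightarrow> V \<in> \<gamma> (mv V)" by metis
    define N where "N = Suc (Max (mv ` F))"
    have mvN: "mv V < N" if "V \<in> F" for V
      unfolding N_def using F(1) that by (simp add: le_imp_less_Suc)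
    define cs where "cs = map (\<lambda>m. (S m, k m)) [0..<N]"
    have cs_len: "length cs = N" by (simp add: cs_def)
    have cs_nth: "cs ! m = (S m, k m)" if "m < N" for m using that by (simp add: cs_def)
    have cs_set: "\<forall>c\<in>set cs. finite (fst c) \<and> fst c \<subseteq> range \<phi>" using Sf by (auto simp: cs_def)
    have "goodseq X d f K cs"
      unfolding goodseq_def
    proof (rule exI[of _ \<gamma>], rule conjI)
      show "\<forall>m<length cs. (\<forall>V\<in>\<gamma> m. openin (subtopology X K) V) \<and> pairwise disjnt (\<gamma> m) \<and>
           refines (\<gamma> m) (cov d f K (fst (cs ! m)) (snd (cs ! m)))"
        using \<gamma> cs_nth cs_len by simp
    next
      show "K \<subseteq> (\<Union>m<length cs. \<Union>(\<gamma> m))"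
      proof
        fix x assume "x \<in> K"
        then obtain V where "V \<in> F" "x \<in> V" using F(3) by blast
        then show "x \<in> (\<Union>m<length cs. \<Union>(\<gamma> m))" using mv mvN cs_len by blast
      qed
    qed
    then obtain P where P: "P \<subseteq> range \<phi>" "realized d f K cs P" using clos[OF cs_set] by blast
    then obtain \<gamma>2 :: "nat \<Rightarrow> 'a set set" where
      \<gamma>2: "\<And>m. m < N \<Longrightarrow> (\<forall>V\<in>\<gamma>2 m. \<exists>Q\<subseteq>P. V = K \<inter> (\<Union>\<psi>\<in>Q. {x. 0 < \<psi> x})) \<and> pairwise disjnt (\<gamma>2 m) \<and>
        refines (\<gamma>2 m) (cov d f K (S m) (k m))"
      and \<gamma>2c: "K \<subseteq> (\<Union>m<N. \<Union>(\<gamma>2 m))"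
      unfolding realized_def using cs_len cs_nth by auto
    define \<gamma>Z where "\<gamma>Z m = (if m < N then (\<lambda>V. hh ` V) ` \<gamma>2 m else {})" for m
    show "\<exists>\<gamma>::nat \<Rightarrow> 'a set set set.
           (\<forall>n. (\<forall>V\<in>\<gamma> n. openin (subtopology Z.mtopology L) V) \<and> pairwise disjnt (\<gamma> n) \<and> refines (\<gamma> n) (\<omega> n)) \<and>
           \<Union>(\<Union>n. \<gamma> n) = topspace (subtopology Z.mtopology L)"
    proof (intro exI[of _ \<gamma>Z] conjI allI ballI)
      fix m W assume W: "W \<in> \<gamma>Z m"
      then obtain V where m: "m < N" and V: "V \<in> \<gamma>2 m" "W = hh ` V"
        by (auto simp: \<gamma>Z_def split: if_splits)
      obtain Q where Q: "Q \<subseteq> P" "V = K \<inter> (\<Union>\<psi>\<in>Q. {x. 0 < \<psi> x})" using \<gamma>2[OF m] V(1) by blast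
      have QR: "Q \<subseteq> range \<phi>" using Q P by blast
      have Weq: "W = L \<inter> (\<Union>\<psi>\<in>Q. {A \<in> topspace Z.mtopology. 0 < \<psi> (rep A)})"
        using hh_image_form[OF KX QR] V Q unfolding L_def by simp
      have o: "openin Z.mtopology (\<Union>\<psi>\<in>Q. {A \<in> topspace Z.mtopology. 0 < \<psi> (rep A)})"
        using open_pos_rep QR by blast
      show "openin (subtopology Z.mtopology L) W" unfolding Weq by (rule openin_subtopology_Int2[OF o])
    next
      fix m
      show "pairwise disjnt (\<gamma>Z m)"
      proof (cases "m < N")
        case m: True
        show ?thesis
          unfolding \<gamma>Z_def using m
        proof (simp only: if_True pairwise_image, intro pairwiseI impI)
          fix V V' assume V: "V \<in> \<gamma>2 m" "V' \<in> \<gamma>2 m" "V \<noteq> V'" "hh ` V \<noteq> hh ` V'"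
          then have dj: "disjnt V V'" using \<gamma>2[OF m] unfolding pairwise_def by blast
          obtain Q' where Q': "Q' \<subseteq> P" "V' = K \<inter> (\<Union>\<psi>\<in>Q'. {x. 0 < \<psi> x})" using \<gamma>2[OF m] V by blast
          have VK: "V \<subseteq> K" using \<gamma>2[OF m] V by blast
          show "disjnt (hh ` V) (hh ` V')"
            unfolding disjnt_def
          proof (rule ccontr)
            assume "hh ` V \<inter> hh ` V' \<noteq> {}"
            then obtain x x' where x: "x \<in> V" "x' \<in> V'" "hh x = hh x'" by blast
            have "x \<in> V'" using sat[OF KX _ _ _ x(3)] Q' P x VK by blast
            then show False using dj x(1) unfolding disjnt_def by blast
          qed
        qed
      qed (simp add: \<gamma>Z_def)
    next
      fix m
      show "refines (\<gamma>Z m) (\<omega> m)"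
        unfolding refines_def
      proof
        fix W assume W: "W \<in> \<gamma>Z m"
        then obtain V where m: "m < N" and V: "V \<in> \<gamma>2 m" "W = hh ` V"
          by (auto simp: \<gamma>Z_def split: if_splits)
        then obtain B where B: "B \<in> cov d f K (S m) (k m)" "V \<subseteq> B" using \<gamma>2[OF m] unfolding refines_def by blast
        obtain U where "U \<in> \<omega> m" "hh ` B \<subseteq> U" using R[OF B(1)] by blast
        then show "\<exists>U\<in>\<omega> m. W \<subseteq> U" using B V by blast
      qed
    next
      show "\<Union>(\<Union>n. \<gamma>Z n) = topspace (subtopology Z.mtopology L)"
        unfolding tsL
      proof
        show "\<Union>(\<Union>n. \<gamma>Z n) \<subseteq> L"
        proof
          fix A assume "A \<in> \<Union>(\<Union>n. \<gamma>Z n)"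
          then obtain m W where "W \<in> \<gamma>Z m" "A \<in> W" by blast
          then obtain V where m: "m < N" and V: "V \<in> \<gamma>2 m" "A \<in> hh ` V"
            by (auto simp: \<gamma>Z_def split: if_splits)
          have "V \<subseteq> K" using \<gamma>2[OF m] V by blast
          then show "A \<in> L" using V unfolding L_def by blast
        qed
        show "L \<subseteq> \<Union>(\<Union>n. \<gamma>Z n)"
        proof
          fix A assume "A \<in> L"
          then obtain x where x: "x \<in> K" "A = hh x" unfolding L_def by blast
          then obtain m V where m: "m < N" and V: "V \<in> \<gamma>2 m" "x \<in> V" using \<gamma>2c by blast
          have "hh ` V \<in> \<gamma>Z m" using m V by (simp add: \<gamma>Z_def)
          then show "A \<in> \<Union>(\<Union>n. \<gamma>Z n)" using x V by blast
        qed
      qed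
    qed
  qed
qed


lemma fact_Z: "weight_le Z.mtopology mtopology \<Longrightarrow> factorization X mtopology f Z.mtopology hh gg"
  unfolding factorization_def
proof (intro conjI ballI impI cont_hh cont_gg)
  fix x assume "x \<in> topspace X" then show "f x = gg (hh x)" by (simp add: gg_hh)
next
  assume "f ` topspace X = topspace mtopology"
  moreover have "gg ` topspace Z.mtopology = f ` topspace X"
  proof -
    have "gg ` topspace Z.mtopology = gg ` hh ` topspace X" by (subst Z.topspace_mtopology) (simp add: ZM_def)
    also have "\<dots> = (\<lambda>x. gg (hh x)) ` topspace X" by (simp add: image_image)
    also have "\<dots> = f ` topspace X" by (rule image_cong) (auto simp: gg_hh)
    finally show ?thesis .
  qed
  ultimately show "gg ` topspace Z.mtopology = topspace mtopology" by simp
qed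

lemma base_infinite:
  assumes BY: "is_base_of mtopology BY" and inf: "infinite M"
  shows "infinite BY"
proof
  assume fin: "finite BY"
  have "inj_on (\<lambda>y. {U\<in>BY. y \<in> U}) M"
  proof (rule inj_onI, rule ccontr)
    fix y y' assume y: "y \<in> M" "y' \<in> M" and eq: "{U\<in>BY. y \<in> U} = {U\<in>BY. y' \<in> U}" and ne: "y \<noteq> y'"
    have pos: "0 < d y y'" using y ne by (simp add: order.not_eq_order_implies_strict)
    obtain C where C: "C \<subseteq> BY" "\<Union>C = mball y (d y y')"
      using BY unfolding is_base_of_def by (meson openin_mball)
    have "y \<in> \<Union>C" using C(2) y pos by simp
    then obtain U where "U \<in> C" "y \<in> U" by blast
    moreover have "y' \<notin> U" using C \<open>U \<in> C\<close> by auto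
    ultimately show False using eq C(1) by blast
  qed
  moreover have "(\<lambda>y. {U\<in>BY. y \<in> U}) ` M \<subseteq> Pow BY" by auto
  then have "finite ((\<lambda>y. {U\<in>BY. y \<in> U}) ` M)" using fin by (meson finite_Pow_iff finite_subset)
  ultimately show False using inf finite_imageD by blast
qed

lemma weight_inf:
  assumes inf: "infinite M"
  shows "weight_le Z.mtopology mtopology"
  unfolding weight_le_def
proof (intro allI impI)
  fix BY assume BY: "is_base_of mtopology BY"
  have infBY: "infinite BY" by (rule base_infinite[OF BY inf])
  define BZ where "BZ = (\<lambda>(U,qs,r). Bset U qs r) ` (BY \<times> (UNIV :: (rat list \<times> rat) set))"
  have "|BZ| \<le>o |BY \<times> (UNIV :: (rat list \<times> rat) set)|" unfolding BZ_def by (rule card_of_image)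
  moreover have "|BY \<times> (UNIV :: (rat list \<times> rat) set)| =o |BY|"
  proof (rule card_of_Times_infinite_simps(1)[OF infBY])
    show "(UNIV :: (rat list \<times> rat) set) \<noteq> {}" by simp
    have "|UNIV :: (rat list \<times> rat) set| \<le>o |UNIV :: nat set|"
      unfolding card_of_ordLeq[symmetric] by (intro exI[of _ to_nat]) auto
    moreover have "|UNIV :: nat set| \<le>o |BY|" using infBY infinite_iff_card_of_nat by blast
    ultimately show "|UNIV :: (rat list \<times> rat) set| \<le>o |BY|" by (rule ordLeq_transitive)
  qed
  ultimately have "|BZ| \<le>o |BY|" by (rule ordLeq_ordIso_trans)
  moreover have "is_base_of Z.mtopology BZ" unfolding BZ_def by (rule base_Z[OF BY])
  ultimately show "\<exists>BZ. is_base_of Z.mtopology BZ \<and> |BZ| \<le>o |BY|" by blast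
qed

lemma Bset_zero:
  assumes z: "\<And>i x. \<phi> i x = 0"
  shows "Bset U qs r = {} \<or> Bset U qs r = Bset U [] 0"
proof (cases "\<forall>i<length qs. \<bar>0 - (of_rat (qs!i)::real)\<bar> < of_rat r")
  case True
  then show ?thesis by (intro disjI2) (auto simp: Bset_def phit_def z)
next
  case False
  then show ?thesis by (intro disjI1) (auto simp: Bset_def phit_def z)
qed

lemma weight_zero:
  assumes z: "\<And>i x. \<phi> i x = 0"
  shows "weight_le Z.mtopology mtopology"
  unfolding weight_le_def
proof (intro allI impI)
  fix BY assume BY: "is_base_of mtopology BY"
  define BZ where "BZ = (\<lambda>U. Bset U [] 0) ` BY"
  have "|BZ| \<le>o |BY|" unfolding BZ_def by (rule card_of_image)
  moreover have "is_base_of Z.mtopology BZ"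
    unfolding is_base_of_def
  proof (intro conjI ballI allI impI)
    fix B assume "B \<in> BZ"
    then show "openin Z.mtopology B" using BY Bset_open unfolding BZ_def is_base_of_def by auto
  next
    fix Op assume Op: "openin Z.mtopology Op"
    then obtain C where C: "C \<subseteq> (\<lambda>(U,qs,r). Bset U qs r) ` (BY \<times> UNIV)" "\<Union>C = Op"
      using base_Z[OF BY] unfolding is_base_of_def by blast
    have "C - {{}} \<subseteq> BZ"
    proof
      fix B assume B: "B \<in> C - {{}}"
      then have "B \<in> (\<lambda>(U,qs,r). Bset U qs r) ` (BY \<times> UNIV)" using C(1) by blast
      then obtain p where p: "p \<in> BY \<times> UNIV" "B = (\<lambda>(U,qs,r). Bset U qs r) p" by blast
      obtain U qs r where "p = (U, qs, r)" by (cases p) auto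
      then have "U \<in> BY" "B = Bset U qs r" using p by auto
      then show "B \<in> BZ" using B Bset_zero[OF z, of U qs r] unfolding BZ_def by auto
    qed
    moreover have "\<Union>(C - {{}}) = Op" using C(2) by auto
    ultimately show "\<exists>C\<subseteq>BZ. \<Union>C = Op" by blast
  qed
  ultimately show "\<exists>BZ. is_base_of Z.mtopology BZ \<and> |BZ| \<le>o |BY|" by blast
qed

lemma ZM_finite_zero:
  assumes z: "\<And>i x. \<phi> i x = 0" and fin: "finite M"
  shows "finite ZM"
proof -
  have "inj_on gg ZM"
  proof (rule inj_onI)
    fix A B assume A: "A \<in> ZM" and B: "B \<in> ZM" and eq: "gg A = gg B"
    obtain x where x: "x \<in> topspace X" "A = hh x" using A by (auto simp: ZM_def)
    obtain y where y: "y \<in> topspace X" "B = hh y" using B by (auto simp: ZM_def)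
    have "f x = f y" using eq x y by (simp add: gg_hh)
    moreover have "sterm \<phi> x y = (\<lambda>i. 0)" by (rule ext) (simp add: sterm_def z)
    ultimately have "rho x y = 0" using fM[OF x(1)] by (simp add: rho_def)
    then show "A = B" using x y hh_eq_iff by simp
  qed
  moreover have "gg ` ZM \<subseteq> M" using rep_in fM by (auto simp: gg_def)
  then have "finite (gg ` ZM)" using fin finite_subset by blast
  ultimately show ?thesis using finite_imageD by blast
qed

end

theorem proposition6p1:
  fixes X :: "'a topology" and Y :: "'b topology" and f :: "'a \<Rightarrow> 'b"
    and K :: "nat \<Rightarrow> 'a set"
  assumes "completely_regular_space X" and "Hausdorff_space X"
    and "\<And>n. compactin X (K n)"
    and "\<And>n. property_C (subtopology X (K n))"
    and "metrizable_space Y"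
    and "continuous_map X Y f"
  shows "\<exists>(Z :: 'a set topology) h g.
           factorization X Y f Z h g \<and> metrizable_space Z \<and>
           (\<forall>n. property_C (subtopology Z (h ` K n)))"
proof -
  obtain M d where md: "Metric_space M d" "Y = Metric_space.mtopology M d"
    using assms(5) unfolding metrizable_space_def by blast
  have fz0: "fz0 M d X f" unfolding fz0_def fz0_axioms_def using md assms(6) by simp
  have KX: "K n \<subseteq> topspace X" for n using assms(3) compactin_subset_topspace by blast
  show ?thesis
  proof (cases "finite M")
    case True
    have fz1: "fz M d X f (\<lambda>_ _. 0)" unfolding fz_def fz_axioms_def using fz0 by simp
    interpret A: fz M d X f "\<lambda>_ _. 0" by (rule fz1)
    have w: "weight_le A.Z.mtopology (Metric_space.mtopology M d)" by (rule A.weight_zero) simp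
    have finZ: "finite A.ZM" by (rule A.ZM_finite_zero[OF _ True]) simp
    show ?thesis
    proof (intro exI conjI allI)
      show "factorization X Y f A.Z.mtopology A.hh A.gg" using A.fact_Z[OF w] md by simp
      show "metrizable_space A.Z.mtopology" by (rule A.Z.metrizable_space_mtopology)
      fix n
      have sub: "A.hh ` K n \<subseteq> A.ZM" using KX A.hh_ZM by blast
      show "property_C (subtopology A.Z.mtopology (A.hh ` K n))"
        by (rule propC_finite[OF A.Z.Hausdorff_space_mtopology]) (use sub finZ finite_subset in auto)
    qed
  next
    case False
    have ex: "\<exists>\<Phi>. countable \<Phi> \<and> \<Phi> \<noteq> {} \<and> \<Phi> \<subseteq> {\<psi>. continuous_map X euclideanreal \<psi>} \<and>
     (\<forall>n cs. (\<forall>c\<in>set cs. finite (fst c) \<and> fst c \<subseteq> \<Phi>) \<longrightarrow> goodseq X d f (K n) cs \<longrightarrow>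
        (\<exists>P\<subseteq>\<Phi>. realized d f (K n) cs P))"
      by (rule closure_family[OF assms(1,2,3)])
    then obtain \<Phi> where H: "countable \<Phi> \<and> \<Phi> \<noteq> {} \<and> \<Phi> \<subseteq> {\<psi>. continuous_map X euclideanreal \<psi>} \<and>
     (\<forall>n cs. (\<forall>c\<in>set cs. finite (fst c) \<and> fst c \<subseteq> \<Phi>) \<longrightarrow> goodseq X d f (K n) cs \<longrightarrow>
        (\<exists>P\<subseteq>\<Phi>. realized d f (K n) cs P))" ..
    have \<Phi>: "countable \<Phi>" "\<Phi> \<noteq> {}" "\<Phi> \<subseteq> {\<psi>. continuous_map X euclideanreal \<psi>}"
      using H by simp_all
    have clos: "\<forall>n cs. (\<forall>c\<in>set cs. finite (fst c) \<and> fst c \<subseteq> \<Phi>) \<longrightarrow> goodseq X d f (K n) cs \<longrightarrow>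
        (\<exists>P\<subseteq>\<Phi>. realized d f (K n) cs P)"
      using H[THEN conjunct2, THEN conjunct2, THEN conjunct2] .
    define \<phi> where "\<phi> = from_nat_into \<Phi>"
    have r\<phi>: "range \<phi> = \<Phi>" unfolding \<phi>_def using \<Phi> by simp
    have fz1: "fz M d X f \<phi>" unfolding fz_def fz_axioms_def using fz0 \<Phi>(3) r\<phi> by auto
    interpret A: fz M d X f \<phi> by (rule fz1)
    have w: "weight_le A.Z.mtopology (Metric_space.mtopology M d)" by (rule A.weight_inf[OF False])
    show ?thesis
    proof (intro exI conjI allI)
      show "factorization X Y f A.Z.mtopology A.hh A.gg" using A.fact_Z[OF w] md by simp
      show "metrizable_space A.Z.mtopology" by (rule A.Z.metrizable_space_mtopology)
      fix n
      show "property_C (subtopology A.Z.mtopology (A.hh ` K n))"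
      proof (rule A.propC[OF assms(3) assms(4)])
        fix cs assume "\<forall>c\<in>set cs. finite (fst c) \<and> fst c \<subseteq> range \<phi>" "goodseq X d f (K n) cs"
        then show "\<exists>P\<subseteq>range \<phi>. realized d f (K n) cs P" unfolding r\<phi> using clos by blast
      qed
    qed
  qed
qed

end
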